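(* Let $m,d,n\ge1$, $p,q,\lambda>0$, $g(\alpha)=\|\alpha/\lambda\|_p^q$, and let $\mathfrak{D}$ be the set of matrices in $\mathbb{R}^{m\times d}$ with unit $\ell_2$-norm columns. Let $\mathbb{P}$ be a probability distribution on $\mathbb{R}^m$ with $\mathbb{P}(\|x\|_2\le1)=1$, and let $X=[x_1,\dots,x_n]$ consist of $n$ i.i.d. samples from $\mathbb{P}$. Define $\Lambda_n(L)=\mathbb{P}(L_X>L)$ and $$\Gamma_n(\gamma)=\sup_{D\in\mathfrak{D}}\mathbb{P}\big(|F_X(D)-\mathbb{E}_{x\sim\mathbb{P}}f_x(D)|>\gamma\big).$$ Then $\Lambda_n(L)=0$ for every $L\ge\lambda\, d^{(1-1/p)_+}(1/2)^{1/q}$, and $$\Gamma_n(\tau/\sqrt8)\le2\exp(-n\tau^2)\quad\text{for all }0\le\tau<+\infty.$$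
   Context: For $x\in\mathbb{R}^m$ and $D\in\mathbb{R}^{m\times d}$, $f_x(D)=\inf_{\alpha\in\mathbb{R}^d}\tfrac12\|x-D\alpha\|_2^2+g(\alpha)$, and $F_X(D)=\frac1n\sum_{i=1}^nf_{x_i}(D)$. Further $L_X=\frac1n\sum_{i=1}^n\|x_i\|_2\cdot\lambda\cdot d^{(1-1/p)_+}(\tfrac12\|x_i\|_2^2)^{1/q}$, where $(t)_+=\max\{t,0\}$. For $0<p<1$, $\|\cdot\|_p$ is the $\ell_p$ quasi-norm. *)

theory Defs
  imports "HOL-Analysis.Analysis" "HOL-Probability.Probability"
begin

definition lp_norm :: "real \<Rightarrow> real^'d \<Rightarrow> real" where
  "lp_norm p a = (\<Sum>i\<in>UNIV. \<bar>a $ i\<bar> powr p) powr (1 / p)"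

definition reg_g :: "real \<Rightarrow> real \<Rightarrow> real \<Rightarrow> real^'d \<Rightarrow> real" where
  "reg_g p q lam a = lp_norm p ((1 / lam) *\<^sub>R a) powr q"

definition f_loss :: "real \<Rightarrow> real \<Rightarrow> real \<Rightarrow> real^'m \<Rightarrow> real^'d^'m \<Rightarrow> real" where
  "f_loss p q lam x D = (INF a\<in>(UNIV :: (real^'d) set). (1/2) * (norm (x - D *v a))^2 + reg_g p q lam a)"

definition F_emp :: "real \<Rightarrow> real \<Rightarrow> real \<Rightarrow> nat \<Rightarrow> (nat \<Rightarrow> real^'m) \<Rightarrow> real^'d^'m \<Rightarrow> real" where
  "F_emp p q lam n X D = (1 / real n) * (\<Sum>i<n. f_loss p q lam (X i) D)"

definition L_emp :: "real \<Rightarrow> real \<Rightarrow> real \<Rightarrow> nat \<Rightarrow> (nat \<Rightarrow> real^'m) \<Rightarrow> 'd itself \<Rightarrow> real" where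
  "L_emp p q lam n X _ = (1 / real n) * (\<Sum>i<n. norm (X i) * lam
      * real CARD('d) powr (max (1 - 1/p) 0) * ((1/2) * (norm (X i))^2) powr (1/q))"

definition unit_col_dicts :: "(real^'d^'m) set" where
  "unit_col_dicts = {D. \<forall>j. norm (column j D) = 1}"

end

theory Submission
  imports Defs
begin

lemma reg_g_nonneg: "reg_g p q lam a \<ge> 0"
  unfolding reg_g_def by simp

lemma reg_g_zero: "reg_g p q lam 0 = 0"
  unfolding reg_g_def lp_norm_def by simp

lemma f_loss_bdd: "bdd_below ((\<lambda>a. (1/2) * (norm (x - D *v a))^2 + reg_g p q lam a) ` UNIV)"
  by (rule bdd_belowI[where m=0]) (auto intro!: add_nonneg_nonneg reg_g_nonneg)

lemma f_loss_nonneg: "f_loss p q lam x D \<ge> 0"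
  unfolding f_loss_def
  by (rule cINF_greatest) (auto intro!: add_nonneg_nonneg reg_g_nonneg)

lemma f_loss_le: fixes D :: "real^'d^'m" shows "f_loss p q lam x D \<le> (1/2) * (norm x)^2"
proof -
  have "f_loss p q lam x D \<le> (1/2) * (norm (x - D *v 0))^2 + reg_g p q lam (0::real^'d)"
    unfolding f_loss_def using cINF_lower[OF f_loss_bdd[of x D p q lam], of "0::real^'d"] by simp
  thus ?thesis by (simp add: reg_g_zero)
qed

lemma f_loss_less_iff: "f_loss p q lam x D < y \<longleftrightarrow> (\<exists>a. (1/2) * (norm (x - D *v a))^2 + reg_g p q lam a < y)"
  unfolding f_loss_def using cINF_less_iff[OF _ f_loss_bdd[of x D p q lam]] by simp

lemma f_loss_borel: "(\<lambda>x. f_loss p q lam x D) \<in> borel_measurable borel"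
proof (rule borel_measurableI_less)
  fix y
  have "{x\<in>space borel. f_loss p q lam x D < y} =
      (\<Union>a. {x. (1/2) * (norm (x - D *v a))^2 + reg_g p q lam a < y})"
    by (auto simp: f_loss_less_iff simp del: of_nat_power)
  also have "open \<dots>"
    by (intro open_UN ballI open_Collect_less continuous_intros)
  finally show "{x\<in>space borel. f_loss p q lam x D < y} \<in> sets borel" by simp
qed

lemma indep_components:
  assumes "prob_space P" "I \<noteq> {}"
  shows "prob_space.indep_vars (PiM I (\<lambda>_. P)) (\<lambda>_. P) (\<lambda>i x. x i) I"
proof -
  interpret product_prob_space "\<lambda>_. P" I by (simp add: assms product_prob_space_def product_sigma_finite_def prob_space_imp_sigma_finite product_prob_space_axioms_def)
  have PI: "prob_space (PiM I (\<lambda>_. P))" by (rule prob_space_PiM) (simp add: assms)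
  show ?thesis
  proof (subst prob_space.indep_vars_iff_distr_eq_PiM'[OF PI assms(2)])
    show "\<And>i. i \<in> I \<Longrightarrow> random_variable P (\<lambda>x. x i)" for i by measurable
    have "distr (PiM I (\<lambda>_. P)) (PiM I (\<lambda>_. P)) (\<lambda>x. restrict (\<lambda>i. x i) I) = distr (PiM I (\<lambda>_. P)) (PiM I (\<lambda>_. P)) (\<lambda>x. x)"
      by (rule distr_cong) (auto simp: space_PiM)
    also have "\<dots> = PiM I (\<lambda>_. P)" by simp
    also have "\<dots> = PiM I (\<lambda>i. distr (PiM I (\<lambda>_. P)) P (\<lambda>x. x i))"
      by (rule PiM_cong) (use distr_PiM_component[of I "\<lambda>_. P"] assms in auto)
    finally show "distr (PiM I (\<lambda>_. P)) (PiM I (\<lambda>_. P)) (\<lambda>x. restrict (\<lambda>i. x i) I) = PiM I (\<lambda>i. distr (PiM I (\<lambda>_. P)) P (\<lambda>x. x i))" .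
  qed
qed


lemma ae_comp_norm:
  assumes "prob_space P" "sets P = sets borel"
    and "measure P {x \<in> space P. norm x \<le> 1} = 1"
  shows "AE x in P. norm (x::'a::real_normed_vector) \<le> 1"
proof -
  interpret prob_space P by fact
  show ?thesis using AE_prob_1[OF assms(3)] by auto
qed

theorem proposition3:
  fixes P :: "(real^'m) measure" and n :: nat and p q lam :: real
  assumes "prob_space P" and "sets P = sets borel"
    and "n \<ge> 1" and "p > 0" and "q > 0" and "lam > 0"
    and "measure P {x \<in> space P. norm x \<le> 1} = 1"
  shows "(\<forall>L. L \<ge> lam * real CARD('d) powr (max (1 - 1/p) 0) * (1/2) powr (1/q) \<longrightarrow>
            measure (PiM {..<n} (\<lambda>_. P))
              {X \<in> space (PiM {..<n} (\<lambda>_. P)). L_emp p q lam n X TYPE('d) > L} = 0)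
       \<and> (\<forall>\<tau>::real. \<tau> \<ge> 0 \<longrightarrow>
            (SUP D\<in>(unit_col_dicts :: (real^'d^'m) set).
               measure (PiM {..<n} (\<lambda>_. P))
                 {X \<in> space (PiM {..<n} (\<lambda>_. P)).
                    \<bar>F_emp p q lam n X D - (\<integral>x. f_loss p q lam x D \<partial>P)\<bar> > \<tau> / sqrt 8})
            \<le> 2 * exp (- real n * \<tau>^2))"
proof -
  define Pi where "Pi = PiM {..<n} (\<lambda>_. P)"
  have PIps: "prob_space Pi" unfolding Pi_def by (rule prob_space_PiM) (simp add: assms)
  interpret PI: prob_space Pi by (rule PIps)
  have aeP: "AE x in P. norm x \<le> 1" by (rule ae_comp_norm[OF assms(1,2,7)])
  have aePi: "AE X in Pi. \<forall>i\<in>{..<n}. norm (X i) \<le> 1"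
    unfolding Pi_def
    by (intro AE_finite_allI) (auto intro!: AE_PiM_component aeP assms(1))
  have part1: "measure Pi {X \<in> space Pi. L_emp p q lam n X TYPE('d) > L} = 0"
    if L: "L \<ge> lam * real CARD('d) powr (max (1 - 1/p) 0) * (1/2) powr (1/q)" for L
  proof -
    define c where "c = lam * real CARD('d) powr (max (1 - 1/p) 0)"
    have c0: "c \<ge> 0" unfolding c_def using assms by simp
    have bnd: "L_emp p q lam n X TYPE('d) \<le> L" if X: "\<forall>i\<in>{..<n}. norm (X i) \<le> 1" for X
    proof -
      have "L_emp p q lam n X TYPE('d) = (1 / real n) * (\<Sum>i<n. norm (X i) * c * ((1/2) * (norm (X i))^2) powr (1/q))"
        unfolding L_emp_def c_def by (simp add: mult.assoc)
      also have "\<dots> \<le> (1 / real n) * (\<Sum>i<n. c * (1/2) powr (1/q))"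
      proof (intro mult_left_mono sum_mono)
        fix i assume i: "i \<in> {..<n}"
        have n1: "norm (X i) \<le> 1" using X i by auto
        have "((1/2) * (norm (X i))^2) powr (1/q) \<le> (1/2) powr (1/q)"
          using n1 assms(5) by (intro powr_mono2) (auto simp: power_le_one)
        moreover have "norm (X i) * c \<le> c" using n1 c0 by (simp add: mult_left_le_one_le)
        ultimately show "norm (X i) * c * ((1/2) * (norm (X i))^2) powr (1/q) \<le> c * (1/2) powr (1/q)"
          using c0 by (intro mult_mono) auto
      qed simp
      also have "\<dots> = c * (1/2) powr (1/q)" using assms(3) by simp
      finally show ?thesis using L c_def by simp
    qed
    show ?thesis
    proof (cases "{X \<in> space Pi. L_emp p q lam n X TYPE('d) > L} \<in> sets Pi")
      case True
      have "AE X in Pi. X \<notin> {X \<in> space Pi. L_emp p q lam n X TYPE('d) > L}"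
        using aePi by eventually_elim (use bnd in force)
      hence "{X \<in> space Pi. L_emp p q lam n X TYPE('d) > L} \<in> null_sets Pi"
        using AE_iff_null_sets[OF True] by simp
      thus ?thesis by (simp add: measure_def null_setsD1)
    next
      case False thus ?thesis by (rule measure_notin_sets)
    qed
  qed
  have part2: "measure Pi {X \<in> space Pi.
                    \<bar>F_emp p q lam n X D - (\<integral>x. f_loss p q lam x D \<partial>P)\<bar> > \<tau> / sqrt 8}
            \<le> 2 * exp (- real n * \<tau>^2)" if tau: "\<tau> \<ge> 0" for \<tau> and D :: "real^'d^'m"
  proof -
    define f where "f = (\<lambda>x. f_loss p q lam x D)"
    have fm: "f \<in> borel_measurable P"
      using f_loss_borel[of p q lam D] unfolding f_def
      by (subst measurable_cong_sets[OF assms(2) refl])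
    have fm': "(\<lambda>x. f (x i)) \<in> borel_measurable Pi" if "i < n" for i
      unfolding Pi_def using fm that by (intro measurable_compose[OF measurable_component_singleton[where M="\<lambda>_. P" and I="{..<n}" and i=i] fm]) auto
    have distr_eq: "distr Pi borel (\<lambda>x. f (x i)) = distr P borel f" if "i < n" for i
    proof -
      have "distr Pi borel (\<lambda>x. f (x i)) = distr (distr Pi P (\<lambda>x. x i)) borel f"
        unfolding Pi_def using fm that by (subst distr_distr) (auto simp: comp_def)
      also have "distr Pi P (\<lambda>x. x i) = P"
        unfolding Pi_def using that assms(1) by (intro distr_PiM_component) auto
      finally show ?thesis .
    qed
    have n0: "0 < n" using assms(3) by simp
    have aef: "AE x in P. f x \<in> {0..1/2}"
      using aeP
    proof eventually_elim
      case (elim x)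
      have "f x \<le> (1/2) * (norm x)^2" unfolding f_def by (rule f_loss_le)
      also have "\<dots> \<le> 1/2" using elim by (simp add: power_le_one)
      finally show ?case unfolding f_def using f_loss_nonneg by simp
    qed
    interpret H: Hoeffding_ineq_iid Pi "{..<n}" "\<lambda>i x. f (x i)" "\<lambda>x. f (x 0)" 0 "1/2" "PI.expectation (\<lambda>x. f (x 0))"
    proof unfold_locales
      show "finite {..<n}" by simp
      show "PI.indep_vars (\<lambda>_. borel) (\<lambda>i x. f (x i)) {..<n}"
        using PI.indep_vars_compose2[OF indep_components[OF assms(1), of "{..<n}", folded Pi_def], of "\<lambda>_. f" "\<lambda>_. borel"]
          fm n0 by auto
      show "distr Pi borel (\<lambda>x. f (x i)) = distr Pi borel (\<lambda>x. f (x 0))" if "i \<in> {..<n}" for i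
        using distr_eq[of i] distr_eq[of 0] that n0 by simp
      show "(\<lambda>x. f (x 0)) \<in> borel_measurable Pi" using fm' n0 by simp
      show "AE x in Pi. f (x 0) \<in> {0..1 / 2}"
        unfolding Pi_def using n0 by (intro AE_PiM_component[where P="\<lambda>x. f x \<in> {0..1/2}"] aef assms(1)) auto
    qed (rule reflexive)
    have mu: "PI.expectation (\<lambda>x. f (x 0)) = (\<integral>x. f x \<partial>P)"
    proof -
      have "(\<integral>x. f x \<partial>P) = (\<integral>x. f x \<partial>(distr Pi P (\<lambda>x. x 0)))"
        unfolding Pi_def using n0 assms(1) by (subst distr_PiM_component) auto
      also have "\<dots> = PI.expectation (\<lambda>x. f (x 0))"
        unfolding Pi_def using fm n0 by (subst integral_distr) auto
      finally show ?thesis by simp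
    qed
    have eps: "\<tau> / sqrt 8 \<ge> 0" using tau by simp
    have H: "PI.prob {x\<in>space Pi. \<bar>(\<Sum>i\<in>{..<n}. f (x i)) / real n - PI.expectation (\<lambda>x. f (x 0))\<bar> \<ge> \<tau> / sqrt 8}
        \<le> 2 * exp (-2 * real n * (\<tau> / sqrt 8)\<^sup>2 / (1/2 - 0)\<^sup>2)"
    proof -
      have hb: "(0::real) < 1/2" by simp
      have In: "{..<n} \<noteq> {}" using n0 by auto
      show ?thesis using H.Hoeffding_ineq_abs_ge'[OF eps hb In] unfolding card_lessThan .
    qed
    have ex: "-2 * real n * (\<tau> / sqrt 8)\<^sup>2 / (1/2 - 0)\<^sup>2 = - real n * \<tau>^2"
      by (simp add: power_divide)
    have meas: "{x\<in>space Pi. \<bar>(\<Sum>i\<in>{..<n}. f (x i)) / real n - PI.expectation (\<lambda>x. f (x 0))\<bar> \<ge> \<tau> / sqrt 8} \<in> sets Pi"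
    proof -
      have fms[measurable]: "(\<lambda>x. \<Sum>i\<in>{..<n}. f (x i)) \<in> borel_measurable Pi"
        by (intro borel_measurable_sum fm') simp
      show ?thesis by measurable
    qed
    have "measure Pi {X \<in> space Pi.
                    \<bar>F_emp p q lam n X D - (\<integral>x. f_loss p q lam x D \<partial>P)\<bar> > \<tau> / sqrt 8}
       \<le> PI.prob {x\<in>space Pi. \<bar>(\<Sum>i\<in>{..<n}. f (x i)) / real n - PI.expectation (\<lambda>x. f (x 0))\<bar> \<ge> \<tau> / sqrt 8}"
      by (rule PI.finite_measure_mono[OF _ meas]) (unfold F_emp_def mu, auto simp: f_def)
    also have "\<dots> \<le> 2 * exp (- real n * \<tau>^2)" using H ex by simp
    finally show ?thesis .
  qed
  have ne: "(unit_col_dicts :: (real^'d^'m) set) \<noteq> {}"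
  proof -
    obtain k :: 'm where True by simp
    define D0 :: "real^'d^'m" where "D0 = (\<chi> i j. axis k (1::real) $ i)"
    have "column j D0 = axis k 1" for j unfolding D0_def column_def by (simp add: vec_eq_iff)
    hence "D0 \<in> unit_col_dicts" unfolding unit_col_dicts_def by simp
    thus ?thesis by auto
  qed
  show ?thesis
    unfolding Pi_def[symmetric]
    using part1 part2 ne by (auto intro!: cSUP_least)
qed

end
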